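(* Let $s\in\{0,\tfrac12\}$, $\lambda\in\mathbb{C}$ and $\sigma\in\mathrm{Aut}(\mathfrak{L}^s_\lambda)$. Then $\sigma(I_k)\in\mathbf{I}:=\mathrm{span}_{\mathbb{C}}\{I_m:m\in\mathbb{Z}\}$ for every $k\in\mathbb{Z}$.
   Context: For $s\in\{0,\tfrac12\}$ and $\lambda\in\mathbb{C}$, $\mathfrak{L}^s_\lambda$ is the complex Lie superalgebra with basis $\{L_m,I_m,G_p,H_p : m\in\mathbb{Z},\ p\in s+\mathbb{Z}\}$, even part spanned by the $L_m,I_m$, odd part spanned by the $G_p,H_p$, with brackets $[L_m,L_n]=(m-n)L_{m+n}$, $[L_m,I_n]=(m-n)I_{m+n}$, $[L_m,H_p]=(\tfrac m2-p)H_{m+p}$, $[L_m,G_p]=(\tfrac m2-p)G_{m+p}+\lambda(m+1)H_{m+p}$, $[I_m,G_p]=(m-2p)H_{m+p}$, $[G_p,G_q]=I_{p+q}$, plus super-antisymmetry; all other brackets of basis elements are zero. $\mathrm{Aut}(\mathfrak{L})$ is the group of bijective parity-preserving linear maps $\sigma$ with $\sigma([x,y])=[\sigma(x),\sigma(y)]$. *)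

theory Defs
  imports Complex_Main
begin

text \<open>The parameter s is encoded by
  eps :: int with s = eps/2 (so eps = 0 or eps = 1).  The odd basis elements
  G_p, H_p with p = j + s are indexed by the integer j.\<close>

datatype bidx = Lb int | Ib int | Gb int | Hb int

fun is_even_idx :: "bidx \<Rightarrow> bool" where
  "is_even_idx (Lb _) = True"
| "is_even_idx (Ib _) = True"
| "is_even_idx (Gb _) = False"
| "is_even_idx (Hb _) = False"

fun is_I_idx :: "bidx \<Rightarrow> bool" where
  "is_I_idx (Ib _) = True"
| "is_I_idx _ = False"

type_synonym vec = "bidx \<Rightarrow> complex"

definition bv :: "bidx \<Rightarrow> vec" where
  "bv b = (\<lambda>c. if c = b then 1 else 0)"

definition supp :: "vec \<Rightarrow> bidx set" where
  "supp x = {b. x b \<noteq> 0}"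

definition V :: "vec set" where
  "V = {x. finite (supp x)}"

definition smult :: "complex \<Rightarrow> vec \<Rightarrow> vec" where
  "smult c x = (\<lambda>b. c * x b)"

definition vadd :: "vec \<Rightarrow> vec \<Rightarrow> vec" where
  "vadd x y = (\<lambda>b. x b + y b)"

definition half_idx :: "int \<Rightarrow> int \<Rightarrow> complex" where
  "half_idx eps j = of_int j + of_int eps / 2"   \<comment> \<open>the value p = j + s\<close>

text \<open>Bracket of basis elements (including super-antisymmetry).\<close>
fun brb :: "int \<Rightarrow> complex \<Rightarrow> bidx \<Rightarrow> bidx \<Rightarrow> vec" where
  "brb eps lam (Lb m) (Lb n) = smult (of_int (m - n)) (bv (Lb (m + n)))"
| "brb eps lam (Lb m) (Ib n) = smult (of_int (m - n)) (bv (Ib (m + n)))"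
| "brb eps lam (Ib n) (Lb m) = smult (- of_int (m - n)) (bv (Ib (m + n)))"
| "brb eps lam (Lb m) (Hb j) = smult (of_int m / 2 - half_idx eps j) (bv (Hb (m + j)))"
| "brb eps lam (Hb j) (Lb m) = smult (- (of_int m / 2 - half_idx eps j)) (bv (Hb (m + j)))"
| "brb eps lam (Lb m) (Gb j) =
     vadd (smult (of_int m / 2 - half_idx eps j) (bv (Gb (m + j)))) (smult (lam * of_int (m + 1)) (bv (Hb (m + j))))"
| "brb eps lam (Gb j) (Lb m) =
     vadd (smult (- (of_int m / 2 - half_idx eps j)) (bv (Gb (m + j)))) (smult (- (lam * of_int (m + 1))) (bv (Hb (m + j))))"
| "brb eps lam (Ib m) (Gb j) = smult (of_int m - 2 * half_idx eps j) (bv (Hb (m + j)))"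
| "brb eps lam (Gb j) (Ib m) = smult (- (of_int m - 2 * half_idx eps j)) (bv (Hb (m + j)))"
| "brb eps lam (Gb j) (Gb k) = bv (Ib (j + k + eps))"   \<comment> \<open>p + q = j + k + 2s\<close>
| "brb eps lam _ _ = (\<lambda>_. 0)"

definition br :: "int \<Rightarrow> complex \<Rightarrow> vec \<Rightarrow> vec \<Rightarrow> vec" where
  "br eps lam x y = (\<lambda>c. \<Sum>a\<in>supp x. \<Sum>b\<in>supp y. x a * y b * brb eps lam a b c)"

definition even_vec :: "vec \<Rightarrow> bool" where
  "even_vec x = (\<forall>b. x b \<noteq> 0 \<longrightarrow> is_even_idx b)"

definition odd_vec :: "vec \<Rightarrow> bool" where
  "odd_vec x = (\<forall>b. x b \<noteq> 0 \<longrightarrow> \<not> is_even_idx b)"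

definition is_aut :: "int \<Rightarrow> complex \<Rightarrow> (vec \<Rightarrow> vec) \<Rightarrow> bool" where
  "is_aut eps lam \<sigma> \<longleftrightarrow>
     bij_betw \<sigma> V V \<and>
     (\<forall>x\<in>V. \<forall>y\<in>V. \<sigma> (vadd x y) = vadd (\<sigma> x) (\<sigma> y)) \<and>
     (\<forall>c. \<forall>x\<in>V. \<sigma> (smult c x) = smult c (\<sigma> x)) \<and>
     (\<forall>x\<in>V. (even_vec x \<longrightarrow> even_vec (\<sigma> x)) \<and> (odd_vec x \<longrightarrow> odd_vec (\<sigma> x))) \<and>
     (\<forall>x\<in>V. \<forall>y\<in>V. \<sigma> (br eps lam x y) = br eps lam (\<sigma> x) (\<sigma> y))"

definition Ispan :: "vec set" where
  "Ispan = {x \<in> V. \<forall>b. x b \<noteq> 0 \<longrightarrow> is_I_idx b}"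

end

theory Submission
  imports Defs
begin

fun gg :: "int \<Rightarrow> bidx \<times> bidx \<Rightarrow> bidx" where
  "gg eps (Gb j, Gb k) = Ib (j + k + eps)"
| "gg eps _ = Lb 0"

lemma brb_odd:
  assumes "\<not> is_even_idx a" "\<not> is_even_idx b" "brb eps lam a b c \<noteq> 0"
  shows "c = gg eps (a, b) \<and> is_I_idx c"
  using assms by (cases a; cases b; auto simp: bv_def split: if_splits)

lemma br_odd:
  assumes "x \<in> V" "y \<in> V" "odd_vec x" "odd_vec y"
  shows "br eps lam x y \<in> Ispan"
proof -
  have fx: "finite (supp x)" and fy: "finite (supp y)" using assms by (auto simp: V_def)
  have key: "br eps lam x y c \<noteq> 0 \<Longrightarrow> c \<in> gg eps ` (supp x \<times> supp y) \<and> is_I_idx c" for c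
  proof -
    assume "br eps lam x y c \<noteq> 0"
    then obtain a b where ab: "a \<in> supp x" "b \<in> supp y" "x a * y b * brb eps lam a b c \<noteq> 0"
      unfolding br_def by (meson sum.not_neutral_contains_not_neutral)
    have "\<not> is_even_idx a" "\<not> is_even_idx b" using ab assms(3,4)
      by (auto simp: odd_vec_def supp_def)
    moreover have "brb eps lam a b c \<noteq> 0" using ab(3) by auto
    ultimately have "c = gg eps (a, b) \<and> is_I_idx c" by (rule brb_odd)
    thus ?thesis using ab by auto
  qed
  have "supp (br eps lam x y) \<subseteq> gg eps ` (supp x \<times> supp y)"
    using key by (auto simp: supp_def)
  hence "finite (supp (br eps lam x y))"
    by (rule finite_subset) (use fx fy in auto)
  thus ?thesis using key by (auto simp: Ispan_def V_def)
qed

lemma supp_bv: "supp (bv b) = {b}" by (auto simp: supp_def bv_def)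

lemma bv_V: "bv b \<in> V" by (simp add: V_def supp_bv)

theorem lemma3p1:
  fixes eps :: int and lam :: complex and \<sigma> :: "vec \<Rightarrow> vec" and k :: int
  assumes "eps \<in> {0, 1}"
    and "is_aut eps lam \<sigma>"
  shows "\<sigma> (bv (Ib k)) \<in> Ispan"
proof -
  have b: "brb eps lam (Gb 0) (Gb (k - eps)) = bv (Ib k)" by simp
  have bb: "bv c c = 1" for c by (simp add: bv_def)
  have e: "br eps lam (bv (Gb 0)) (bv (Gb (k - eps))) = bv (Ib k)"
    unfolding br_def supp_bv by (rule ext) (simp only: sum.insert_if finite.emptyI empty_iff if_False sum.empty add_0_right bb mult_1_left b)
  have odd: "odd_vec (bv (Gb j))" for j unfolding odd_vec_def bv_def by auto
  from assms(2) have bij: "bij_betw \<sigma> V V"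
    and hom: "\<forall>x\<in>V. \<forall>y\<in>V. \<sigma> (br eps lam x y) = br eps lam (\<sigma> x) (\<sigma> y)"
    and par: "\<forall>x\<in>V. odd_vec x \<longrightarrow> odd_vec (\<sigma> x)"
    unfolding is_aut_def by blast+
  have inV: "\<sigma> (bv b) \<in> V" for b by (rule bij_betw_apply[OF bij bv_V])
  have "\<sigma> (bv (Ib k)) = br eps lam (\<sigma> (bv (Gb 0))) (\<sigma> (bv (Gb (k - eps))))"
    using hom[rule_format, OF bv_V bv_V, of "Gb 0" "Gb (k - eps)"] e by (simp only:)
  also have "\<dots> \<in> Ispan"
    by (intro br_odd inV par[rule_format] bv_V odd)
  finally show ?thesis .
qed

end
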